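(* The relation $\longrightarrow_\beta^\infty$ on $\Lambda^{001}$ satisfies: (1) it is reflexive; (2) ${\longrightarrow_\beta^*} \subseteq {\longrightarrow_\beta^\infty}$; (3) it is transitive: if $M \longrightarrow_\beta^\infty M'$ and $M' \longrightarrow_\beta^\infty M''$, then $M \longrightarrow_\beta^\infty M''$.
   Context: Fix a set $\mathcal V$ of variables. A 001-infinitary λ-term is a possibly infinite tree built from variables $x\in\mathcal V$ (leaves), abstractions $\lambda x.M$ (unary nodes) and applications $(M)N$ (binary nodes, $M$ the function and $N$ the argument), such that every infinite branch of the tree enters infinitely often the argument position $N$ of an application node. Equivalently, $\Lambda^{001}=\nu Y.\mu X.(\mathcal V+\lambda\mathcal V.X+(X)Y)$. Terms are taken up to α-equivalence, and it is assumed that fresh variables are always available (e.g. every subterm has finitely many free variables). Capture-avoiding substitution $M[N/x]$ is defined corecursively by $x[N/x]=N$, $y[N/x]=y$ for $y\ne x$, $(\lambda y.M)[N/x]=\lambda y.M[N/x]$ with $y$ fresh, and $((M)M')[N/x]=(M[N/x])M'[N/x]$. One-step β-reduction $\longrightarrow_\beta$ is the contextual closure (under abstractions and on both sides of applications, each step having a finite derivation) of $(\lambda x.M)N\longrightarrow_\beta M[N/x]$; $\longrightarrow_\beta^*$ is its reflexive-transitive closure. The infinitary reduction $\longrightarrow_\beta^\infty\subseteq\Lambda^{001}\times\Lambda^{001}$ is defined by the following rules, where derivations may be infinite (non-well-founded) provided every infinite branch of a derivation passes infinitely often through the third premise of rule (@): (var) if $M\longrightarrow_\beta^* x$ then $M\longrightarrow_\beta^\infty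 x$; (λ) if $M\longrightarrow_\beta^*\lambda x.P$ and $P\longrightarrow_\beta^\infty P'$ then $M\longrightarrow_\beta^\infty\lambda x.P'$; (@) if $M\longrightarrow_\beta^*(P)Q$, $P\longrightarrow_\beta^\infty P'$ and $Q\longrightarrow_\beta^\infty Q'$ then $M\longrightarrow_\beta^\infty (P')Q'$. *)

theory Defs
  imports Main
begin

text \<open>Possibly infinite lambda-terms, represented with de Bruijn indices
  (so that terms are automatically taken up to alpha-equivalence).\<close>

codatatype lterm = LVar nat | LLam lterm | LApp lterm lterm

text \<open>The 001 condition: \<nu>Y.\<mu>X.(V + \<lambda>V.X + (X)Y).
  The inner least fixed point: a finite spine of abstractions and
  function positions, whose argument subterms satisfy P.\<close>

inductive spine :: "(lterm \<Rightarrow> bool) \<Rightarrow> lterm \<Rightarrow> bool" for P where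
  spine_var: "spine P (LVar x)"
| spine_lam: "spine P M \<Longrightarrow> spine P (LLam M)"
| spine_app: "spine P M \<Longrightarrow> P N \<Longrightarrow> spine P (LApp M N)"

lemma spine_mono[mono]: "(\<And>x. P x \<longrightarrow> Q x) \<Longrightarrow> spine P t \<longrightarrow> spine Q t"
proof
  assume h: "\<And>x. P x \<longrightarrow> Q x" and "spine P t"
  from \<open>spine P t\<close> show "spine Q t" by (induction rule: spine.induct) (auto intro: spine.intros h[rule_format])
qed

coinductive wf001 :: "lterm \<Rightarrow> bool" where
  "spine wf001 M \<Longrightarrow> wf001 M"

primcorec lift :: "nat \<Rightarrow> lterm \<Rightarrow> lterm" where
  "lift k t = (case t of
      LVar i \<Rightarrow> LVar (if i < k then i else Suc i)
    | LLam M \<Rightarrow> LLam (lift (Suc k) M)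
    | LApp M N \<Rightarrow> LApp (lift k M) (lift k N))"

text \<open>\<open>subst k s t\<close> replaces index k in t by s (and decrements the larger
  free indices); it is t[s/k].\<close>

primcorec subst :: "nat \<Rightarrow> lterm \<Rightarrow> lterm \<Rightarrow> lterm" where
  "subst k s t = (case t of
      LVar i \<Rightarrow> (if i < k then LVar i
                 else if i = k then (case s of LVar j \<Rightarrow> LVar j | LLam b \<Rightarrow> LLam b
                                     | LApp a b \<Rightarrow> LApp a b)
                 else LVar (i - 1))
    | LLam M \<Rightarrow> LLam (subst (Suc k) (lift 0 s) M)
    | LApp M N \<Rightarrow> LApp (subst k s M) (subst k s N))"

inductive beta :: "lterm \<Rightarrow> lterm \<Rightarrow> bool" where
  beta_redex: "beta (LApp (LLam M) N) (subst 0 N M)"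
| beta_lam: "beta M M' \<Longrightarrow> beta (LLam M) (LLam M')"
| beta_appL: "beta M M' \<Longrightarrow> beta (LApp M N) (LApp M' N)"
| beta_appR: "beta N N' \<Longrightarrow> beta (LApp M N) (LApp M N')"

abbreviation beta_star :: "lterm \<Rightarrow> lterm \<Rightarrow> bool" where
  "beta_star \<equiv> beta\<^sup>*\<^sup>*"

text \<open>Infinitary reduction: \<nu>Y.\<mu>X. rules, where the third premise of (@)
  refers to the coinductive Y and all other recursive premises to the
  inductive X.\<close>

inductive ired_step :: "(lterm \<Rightarrow> lterm \<Rightarrow> bool) \<Rightarrow> lterm \<Rightarrow> lterm \<Rightarrow> bool" for R where
  ired_var: "beta_star M (LVar x) \<Longrightarrow> ired_step R M (LVar x)"
| ired_lam: "beta_star M (LLam P) \<Longrightarrow> ired_step R P P' \<Longrightarrow> ired_step R M (LLam P')"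
| ired_app: "beta_star M (LApp P Q) \<Longrightarrow> ired_step R P P' \<Longrightarrow> R Q Q'
             \<Longrightarrow> ired_step R M (LApp P' Q')"

lemma ired_step_mono[mono]:
  "(\<And>x y. R x y \<longrightarrow> S x y) \<Longrightarrow> ired_step R a b \<longrightarrow> ired_step S a b"
proof
  assume h: "\<And>x y. R x y \<longrightarrow> S x y" and "ired_step R a b"
  from \<open>ired_step R a b\<close> show "ired_step S a b" by (induction rule: ired_step.induct) (auto intro: ired_step.intros h[rule_format])
qed

coinductive ired :: "lterm \<Rightarrow> lterm \<Rightarrow> bool" where
  "ired_step ired M M' \<Longrightarrow> ired M M'"

end

theory Submission
  imports Defs
begin

definition bstep :: "(lterm \<Rightarrow> lterm \<Rightarrow> bool) \<Rightarrow> lterm \<Rightarrow> lterm \<Rightarrow> bool" where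
  "bstep R x y \<longleftrightarrow> x = y \<or> (\<exists>i. x = LVar i \<and> y = LVar i)
     \<or> (\<exists>a b. x = LLam a \<and> y = LLam b \<and> (R a b \<or> a = b))
     \<or> (\<exists>a b c d. x = LApp a c \<and> y = LApp b d \<and> (R a b \<or> a = b) \<and> (R c d \<or> c = d))"

lemma eq_coind:
  assumes r: "R x y"
  and step: "\<And>x y. R x y \<Longrightarrow> bstep R x y"
  shows "x = y"
proof (rule lterm.coinduct_strong[of R, OF r])
  fix u v assume "R u v"
  from step[OF this] show "is_LVar u = is_LVar v \<and>
    (is_LVar u \<longrightarrow> is_LVar v \<longrightarrow> un_LVar u = un_LVar v) \<and>
    is_LLam u = is_LLam v \<and>
    (is_LLam u \<longrightarrow> is_LLam v \<longrightarrow> R (un_LLam u) (un_LLam v) \<or> un_LLam u = un_LLam v) \<and>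
    (is_LApp u \<longrightarrow> is_LApp v \<longrightarrow>
     (R (un_LApp1 u) (un_LApp1 v) \<or> un_LApp1 u = un_LApp1 v) \<and>
     (R (un_LApp2 u) (un_LApp2 v) \<or> un_LApp2 u = un_LApp2 v))"
    unfolding bstep_def by (cases u) auto
qed

lemma lift_simps[simp]:
  "lift k (LVar i) = LVar (if i < k then i else Suc i)"
  "lift k (LLam M) = LLam (lift (Suc k) M)"
  "lift k (LApp M N) = LApp (lift k M) (lift k N)"
  by (subst lift.code; simp)+

lemma case_eta: "(case s of LVar j \<Rightarrow> LVar j | LLam b \<Rightarrow> LLam b | LApp a b \<Rightarrow> LApp a b) = s"
  by (cases s) auto

lemma subst_simps[simp]:
  "subst k s (LVar i) = (if i < k then LVar i else if i = k then s else LVar (i - 1))"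
  "subst k s (LLam M) = LLam (subst (Suc k) (lift 0 s) M)"
  "subst k s (LApp M N) = LApp (subst k s M) (subst k s N)"
  by (subst subst.code; simp add: case_eta)+

lemma lift_lift[simp]: "i \<le> j \<Longrightarrow> lift i (lift j N) = lift (Suc j) (lift i N)"
proof (rule eq_coind[where R="\<lambda>x y. \<exists>i j N. i \<le> j \<and> x = lift i (lift j N) \<and> y = lift (Suc j) (lift i N)"])
  fix x y assume "\<exists>i j N. i \<le> j \<and> x = lift i (lift j N) \<and> y = lift (Suc j) (lift i N)"
  then obtain i j N where h: "i \<le> j" "x = lift i (lift j N)" "y = lift (Suc j) (lift i N)" by blast
  show "bstep (\<lambda>x y. \<exists>i j N. i \<le> j \<and> x = lift i (lift j N) \<and> y = lift (Suc j) (lift i N)) x y"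
  proof (cases N)
    case (LVar v) then show ?thesis using h by (auto simp: bstep_def)
  next
    case (LLam P) then show ?thesis using h by (simp add: bstep_def, blast)
  next
    case (LApp P Q) then show ?thesis using h by (simp add: bstep_def, blast)
  qed
qed blast

lemma subst_lift[simp]: "subst j s (lift j t) = t"
proof (rule eq_coind[where R="\<lambda>x y. \<exists>j s. x = subst j s (lift j y)"])
  fix x y assume "\<exists>j s. x = subst j s (lift j y)"
  then obtain j s where h: "x = subst j s (lift j y)" by blast
  show "bstep (\<lambda>x y. \<exists>j s. x = subst j s (lift j y)) x y"
  proof (cases y)
    case (LVar v) then show ?thesis using h by (auto simp: bstep_def)
  next
    case (LLam P) then show ?thesis using h by (simp add: bstep_def, blast)
  next
    case (LApp P Q) then show ?thesis using h by (simp add: bstep_def, blast)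
  qed
qed blast

lemma lift_subst[simp]: "i \<le> k \<Longrightarrow> lift i (subst k N Q) = subst (Suc k) (lift i N) (lift i Q)"
proof (rule eq_coind[where R="\<lambda>x y. \<exists>i k N Q. i \<le> k \<and> x = lift i (subst k N Q) \<and> y = subst (Suc k) (lift i N) (lift i Q)"])
  fix x y assume "\<exists>i k N Q. i \<le> k \<and> x = lift i (subst k N Q) \<and> y = subst (Suc k) (lift i N) (lift i Q)"
  then obtain i k N Q where h: "i \<le> k" "x = lift i (subst k N Q)" "y = subst (Suc k) (lift i N) (lift i Q)" by blast
  show "bstep (\<lambda>x y. \<exists>i k N Q. i \<le> k \<and> x = lift i (subst k N Q) \<and> y = subst (Suc k) (lift i N) (lift i Q)) x y"
  proof (cases Q)
    case (LVar v) then show ?thesis using h by (auto simp: bstep_def)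
  next
    case (LLam P) then show ?thesis using h by (simp add: bstep_def, blast)
  next
    case (LApp P Q) then show ?thesis using h by (simp add: bstep_def, blast)
  qed
qed blast

lemma lift_subst2: "j \<le> k \<Longrightarrow> lift k (subst j N M) = subst j (lift k N) (lift (Suc k) M)"
proof (rule eq_coind[where R="\<lambda>x y. \<exists>j k N M. j \<le> k \<and> x = lift k (subst j N M) \<and> y = subst j (lift k N) (lift (Suc k) M)"])
  fix x y assume "\<exists>j k N M. j \<le> k \<and> x = lift k (subst j N M) \<and> y = subst j (lift k N) (lift (Suc k) M)"
  then obtain j k N M where h: "j \<le> k" "x = lift k (subst j N M)" "y = subst j (lift k N) (lift (Suc k) M)" by blast
  show "bstep (\<lambda>x y. \<exists>j k N M. j \<le> k \<and> x = lift k (subst j N M) \<and> y = subst j (lift k N) (lift (Suc k) M)) x y"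
  proof (cases M)
    case (LVar v) then show ?thesis using h by (auto simp: bstep_def)
  next
    case (LLam P) then show ?thesis using h by (simp add: bstep_def, blast)
  next
    case (LApp P Q) then show ?thesis using h by (simp add: bstep_def, blast)
  qed
qed blast

lemma subst_subst: "j \<le> k \<Longrightarrow> subst k N (subst j Q P) = subst j (subst k N Q) (subst (Suc k) (lift j N) P)"
proof (rule eq_coind[where R="\<lambda>x y. \<exists>j k N Q P. j \<le> k \<and> x = subst k N (subst j Q P) \<and> y = subst j (subst k N Q) (subst (Suc k) (lift j N) P)"])
  fix x y assume "\<exists>j k N Q P. j \<le> k \<and> x = subst k N (subst j Q P) \<and> y = subst j (subst k N Q) (subst (Suc k) (lift j N) P)"
  then obtain j k N Q P where h: "j \<le> k" "x = subst k N (subst j Q P)" "y = subst j (subst k N Q) (subst (Suc k) (lift j N) P)" by blast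
  show "bstep (\<lambda>x y. \<exists>j k N Q P. j \<le> k \<and> x = subst k N (subst j Q P) \<and> y = subst j (subst k N Q) (subst (Suc k) (lift j N) P)) x y"
  proof (cases P)
    case (LVar v) then show ?thesis using h by (auto simp: bstep_def)
  next
    case (LLam P) then show ?thesis using h by (simp add: bstep_def, blast)
  next
    case (LApp P Q) then show ?thesis using h by (simp add: bstep_def, blast)
  qed
qed blast


lemma beta_lift: "beta M N \<Longrightarrow> beta (lift k M) (lift k N)"
proof (induction arbitrary: k rule: beta.induct)
  case (beta_redex M N)
  then show ?case using beta.beta_redex[of "lift (Suc k) M" "lift k N"]
    by (simp add: lift_subst2)
qed (auto intro: beta.intros)

lemma beta_subst: "beta M M1 \<Longrightarrow> beta (subst k N M) (subst k N M1)"
proof (induction arbitrary: k N rule: beta.induct)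
  case (beta_redex P Q)
  then show ?case using beta.beta_redex[of "subst (Suc k) (lift 0 N) P" "subst k N Q"]
    by (simp add: subst_subst)
qed (auto intro: beta.intros)

lemma star_lift: "beta_star M N \<Longrightarrow> beta_star (lift k M) (lift k N)"
  by (induction rule: rtranclp_induct) (auto intro: rtranclp.rtrancl_into_rtrancl beta_lift)

lemma star_subst: "beta_star M N \<Longrightarrow> beta_star (subst k S M) (subst k S N)"
  by (induction rule: rtranclp_induct) (auto intro: rtranclp.rtrancl_into_rtrancl beta_subst)

lemma star_lam: "beta_star M N \<Longrightarrow> beta_star (LLam M) (LLam N)"
  by (induction rule: rtranclp_induct) (auto intro: rtranclp.rtrancl_into_rtrancl beta.intros)

lemma star_appL: "beta_star M N \<Longrightarrow> beta_star (LApp M Q) (LApp N Q)"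
  by (induction rule: rtranclp_induct) (auto intro: rtranclp.rtrancl_into_rtrancl beta.intros)

lemma ired_iff: "ired M N \<longleftrightarrow> ired_step ired M N"
  by (subst ired.simps) simp

lemma ired_prepend_step: "beta_star M N \<Longrightarrow> ired_step R N N' \<Longrightarrow> ired_step R M N'"
  by (erule ired_step.cases) (auto intro: ired_step.intros rtranclp_trans)

lemma ired_prepend: "beta_star M N \<Longrightarrow> ired N N' \<Longrightarrow> ired M N'"
  using ired_prepend_step ired_iff by blast

lemma ired_step_mono': "ired_step R a b \<Longrightarrow> (\<And>x y. R x y \<Longrightarrow> S x y) \<Longrightarrow> ired_step S a b"
  using ired_step_mono by blast

lemma inv_var: "ired M (LVar x) \<Longrightarrow> beta_star M (LVar x)"
  by (subst (asm) ired_iff) (erule ired_step.cases, auto)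

lemma inv_lam: "ired M (LLam P') \<Longrightarrow> \<exists>P. beta_star M (LLam P) \<and> ired P P'"
  by (subst (asm) ired_iff) (erule ired_step.cases, auto simp: ired_iff)

lemma inv_app: "ired M (LApp P' Q') \<Longrightarrow> \<exists>P Q. beta_star M (LApp P Q) \<and> ired P P' \<and> ired Q Q'"
  by (subst (asm) ired_iff) (erule ired_step.cases, auto simp: ired_iff)

lemma ired_lift: "ired M M' \<Longrightarrow> ired (lift k M) (lift k M')"
proof (coinduction arbitrary: k M M' rule: ired.coinduct)
  case (ired k M M')
  from ired have "ired_step ired M M'" by (simp add: ired_iff)
  then have "ired_step (\<lambda>a b. (\<exists>k M M'. a = lift k M \<and> b = lift k M' \<and> ired M M') \<or> ired a b) (lift k M) (lift k M')"
  proof (induction arbitrary: k rule: ired_step.induct)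
    case (ired_var M x)
    then show ?case using star_lift[OF ired_var, of k] by (auto intro: ired_step.intros)
  next
    case (ired_lam M P P')
    then show ?case using star_lift[OF ired_lam(1), of k] by (auto intro: ired_step.intros)
  next
    case (ired_app M P Q P' Q')
    then show ?case using star_lift[OF ired_app(1), of k] by (auto intro!: ired_step.ired_app)
  qed
  then show ?case by blast
qed

lemma ired_subst: "ired M M' \<Longrightarrow> ired N N' \<Longrightarrow> ired (subst k N M) (subst k N' M')"
proof (coinduction arbitrary: k M M' N N' rule: ired.coinduct)
  case (ired k M M' N N')
  from ired have "ired_step ired M M'" by (simp add: ired_iff)
  then have "ired_step (\<lambda>a b. (\<exists>k M M' N N'. a = subst k N M \<and> b = subst k N' M' \<and> ired M M' \<and> ired N N') \<or> ired a b) (subst k N M) (subst k N' M')"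
    using ired(2)
  proof (induction arbitrary: k N N' rule: ired_step.induct)
    case (ired_var M x)
    have st: "beta_star (subst k N M) (subst k N (LVar x))" using star_subst[OF ired_var(1)] .
    show ?case
    proof (cases "x < k \<or> x > k")
      case True
      then show ?thesis using st by (auto intro: ired_step.intros)
    next
      case False
      then have "x = k" by simp
      have "ired_step ired N N'" using ired_var(2) by (simp add: ired_iff)
      then have "ired_step (\<lambda>a b. (\<exists>k M M' N N'. a = subst k N M \<and> b = subst k N' M' \<and> ired M M' \<and> ired N N') \<or> ired a b) N N'"
        by (rule ired_step_mono') simp
      then show ?thesis using st \<open>x = k\<close> by (auto intro: ired_prepend_step)
    qed
  next
    case (ired_lam M P P')
    have "ired (lift 0 N) (lift 0 N')" using ired_lam(4) by (rule ired_lift)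
    then have "ired_step (\<lambda>a b. (\<exists>k M M' N N'. a = subst k N M \<and> b = subst k N' M' \<and> ired M M' \<and> ired N N') \<or> ired a b) (subst (Suc k) (lift 0 N) P) (subst (Suc k) (lift 0 N') P')"
      by (rule ired_lam(3))
    then show ?case using star_subst[OF ired_lam(1), of k N] by (auto intro: ired_step.intros)
  next
    case (ired_app M P Q P' Q')
    have st: "beta_star (subst k N M) (LApp (subst k N P) (subst k N Q))"
      using star_subst[OF ired_app(1), of k N] by simp
    show ?case
      unfolding subst_simps
      by (rule ired_step.ired_app[OF st ired_app.IH[OF ired_app.prems]]) (use ired_app.hyps ired_app.prems in blast)
  qed
  then show ?case by blast
qed

lemma ired_append: "beta M' M'' \<Longrightarrow> ired M M' \<Longrightarrow> ired M M''"
proof (induction arbitrary: M rule: beta.induct)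
  case (beta_redex P' Q')
  from inv_app[OF beta_redex] obtain P1 Q1 where
    h1: "beta_star M (LApp P1 Q1)" "ired P1 (LLam P')" "ired Q1 Q'" by blast
  from inv_lam[OF h1(2)] obtain P2 where h2: "beta_star P1 (LLam P2)" "ired P2 P'" by blast
  have "beta_star M (LApp (LLam P2) Q1)" using h1(1) star_appL[OF h2(1)] by (rule rtranclp_trans)
  then have "beta_star M (subst 0 Q1 P2)" by (rule rtranclp.rtrancl_into_rtrancl) (rule beta.beta_redex)
  moreover have "ired (subst 0 Q1 P2) (subst 0 Q' P')" using h2(2) h1(3) by (rule ired_subst)
  ultimately show ?case by (rule ired_prepend)
next
  case (beta_lam N N'')
  from inv_lam[OF beta_lam(3)] obtain P1 where a: "beta_star M (LLam P1)" "ired P1 N" by blast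
  have "ired_step ired P1 N''" using beta_lam(2)[OF a(2)] by (simp add: ired_iff)
  then show ?case using a(1) by (simp add: ired_iff[of M] ired_step.ired_lam)
next
  case (beta_appL P P'' Q)
  from inv_app[OF beta_appL(3)] obtain P1 Q1 where "beta_star M (LApp P1 Q1)" "ired P1 P" "ired Q1 Q" by blast
  moreover have "ired_step ired P1 P''" using beta_appL(2) \<open>ired P1 P\<close> by (simp add: ired_iff)
  ultimately show ?case by (simp add: ired_iff[of M] ired_step.ired_app)
next
  case (beta_appR Q Q'' P)
  from inv_app[OF beta_appR(3)] obtain P1 Q1 where "beta_star M (LApp P1 Q1)" "ired P1 P" "ired Q1 Q" by blast
  moreover have "ired Q1 Q''" using beta_appR(2) \<open>ired Q1 Q\<close> by simp
  moreover have "ired_step ired P1 P" using \<open>ired P1 P\<close> by (simp add: ired_iff)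
  ultimately show ?case by (simp add: ired_iff[of M] ired_step.ired_app)
qed

lemma ired_append_star: "beta_star M' M'' \<Longrightarrow> ired M M' \<Longrightarrow> ired M M''"
  by (induction rule: rtranclp_induct) (auto intro: ired_append)

lemma ired_refl: "wf001 M \<Longrightarrow> ired M M"
proof (coinduction arbitrary: M rule: ired.coinduct)
  case (ired M)
  from ired have "spine wf001 M" by (cases rule: wf001.cases) auto
  then have "ired_step (\<lambda>a b. (\<exists>M. a = M \<and> b = M \<and> wf001 M) \<or> ired a b) M M"
    by (induction rule: spine.induct) (auto intro: ired_step.intros)
  then show ?case by blast
qed

lemma ired_trans: "ired A B \<Longrightarrow> ired B C \<Longrightarrow> ired A C"
proof (coinduction arbitrary: A B C rule: ired.coinduct)
  case (ired A B C)
  from ired(2) have "ired_step ired B C" by (simp add: ired_iff)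
  then have "ired_step (\<lambda>a c. (\<exists>A B C. a = A \<and> c = C \<and> ired A B \<and> ired B C) \<or> ired a c) A C"
    using ired(1)
  proof (induction arbitrary: A rule: ired_step.induct)
    case (ired_var M x)
    then have "ired A (LVar x)" using ired_append_star by blast
    then show ?case by (auto dest: inv_var intro: ired_step.intros)
  next
    case (ired_lam M P P')
    then have "ired A (LLam P)" using ired_append_star by blast
    from inv_lam[OF this] obtain P1 where "beta_star A (LLam P1)" "ired P1 P" by blast
    then show ?case using ired_lam(3) by (auto intro: ired_step.intros)
  next
    case (ired_app M P Q P' Q')
    then have "ired A (LApp P Q)" using ired_append_star by blast
    from inv_app[OF this] obtain P1 Q1 where "beta_star A (LApp P1 Q1)" "ired P1 P" "ired Q1 Q" by blast
    then show ?case using ired_app(3,4) by (auto intro!: ired_step.ired_app)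
  qed
  then show ?case by blast
qed

theorem mainTheorem1:
  shows "(\<forall>M. wf001 M \<longrightarrow> ired M M)
       \<and> (\<forall>M N. wf001 M \<longrightarrow> wf001 N \<longrightarrow> beta_star M N \<longrightarrow> ired M N)
       \<and> (\<forall>M M' M''. wf001 M \<longrightarrow> wf001 M' \<longrightarrow> wf001 M'' \<longrightarrow>
            ired M M' \<longrightarrow> ired M' M'' \<longrightarrow> ired M M'')"
  using ired_refl ired_prepend ired_trans by blast

end
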